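(* Let $f:\{-1,1\}^n\to\{-1,1\}$ be a boolean function, let $V_1\subsetneq[n]$, $k\in[n]\setminus V_1$, $V_2=V_1\cup\{k\}$, and $\epsilon\in(0,\tfrac12)$. Then $$M_{V_2,\epsilon}(f)-M_{V_1,\epsilon}(f)\ge -I_k(f)\Big(3\epsilon+2\epsilon^2+\Big(\frac{I_k(f)}{4}\Big)^{-\epsilon}-1\Big),$$ where the right-hand side is interpreted as $0$ when $I_k(f)=0$.
   Context: Let $x$ be uniform on $\{-1,1\}^n$; $\mu_k$ flips the $k$-th coordinate; $I_k(f)=\mathbb{P}_x[f(x)\neq f(\mu_k(x))]$. For $J\subseteq[n]$ and $x\in\{-1,1\}^n$, the restriction $f_{J^c\to x}:\{-1,1\}^J\to\{-1,1\}$ is $f_{J^c\to x}(y)=f(z)$ with $z_i=y_i$ for $i\in J$ and $z_i=x_i$ for $i\notin J$; its Fourier coefficients are $\widehat{f_{J^c\to x}}(S)=\mathbb{E}_y[f_{J^c\to x}(y)\prod_{i\in S}y_i]$ for $S\subseteq J$, $y$ uniform on $\{-1,1\}^J$. For $V\subseteq[n]$ and $\epsilon\in[0,\tfrac12)$, the $\epsilon$-moment of $V^c$-restricted Fourier coefficients is $M_{V,\epsilon}(f)=\mathbb{E}_x\sum_{S\subseteq V}|\widehat{f_{V^c\to x}}(S)|^{2(1+\epsilon)}$; for $V=\emptyset$ this equals $\mathbb{E}_x|f(x)|^{2(1+\epsilon)}=1$. *)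

theory Defs
  imports Complex_Main
begin

text \<open>Points of the cube over a coordinate set J: functions nat => real taking values
in {-1,1} on J and the canonical value 1 outside J. The cube {-1,1}^n is the cube
over [n] = {0..<n} (coordinates are 0-indexed).\<close>

definition cube_on :: "nat set \<Rightarrow> (nat \<Rightarrow> real) set" where
  "cube_on J = {x. (\<forall>i\<in>J. x i = -1 \<or> x i = 1) \<and> (\<forall>i. i \<notin> J \<longrightarrow> x i = 1)}"

abbreviation cube :: "nat \<Rightarrow> (nat \<Rightarrow> real) set" where
  "cube n \<equiv> cube_on {0..<n}"

definition is_boolean_fun :: "nat \<Rightarrow> ((nat \<Rightarrow> real) \<Rightarrow> real) \<Rightarrow> bool" where
  "is_boolean_fun n f \<longleftrightarrow> (\<forall>x\<in>cube n. f x = -1 \<or> f x = 1)"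

definition flip :: "nat \<Rightarrow> (nat \<Rightarrow> real) \<Rightarrow> (nat \<Rightarrow> real)" where
  "flip k x = x(k := - x k)"

definition influence :: "nat \<Rightarrow> ((nat \<Rightarrow> real) \<Rightarrow> real) \<Rightarrow> nat \<Rightarrow> real" where
  "influence n f k = real (card {x \<in> cube n. f x \<noteq> f (flip k x)}) / 2 ^ n"

definition restrict_fun ::
  "((nat \<Rightarrow> real) \<Rightarrow> real) \<Rightarrow> nat set \<Rightarrow> (nat \<Rightarrow> real) \<Rightarrow> (nat \<Rightarrow> real) \<Rightarrow> real" where
  "restrict_fun f J x y = f (\<lambda>i. if i \<in> J then y i else x i)"

definition restr_fourier ::
  "((nat \<Rightarrow> real) \<Rightarrow> real) \<Rightarrow> nat set \<Rightarrow> (nat \<Rightarrow> real) \<Rightarrow> nat set \<Rightarrow> real" where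
  "restr_fourier f J x S =
     (\<Sum>y\<in>cube_on J. restrict_fun f J x y * (\<Prod>i\<in>S. y i)) / 2 ^ card J"

definition moment :: "nat \<Rightarrow> nat set \<Rightarrow> real \<Rightarrow> ((nat \<Rightarrow> real) \<Rightarrow> real) \<Rightarrow> real" where
  "moment n V \<epsilon> f =
     (\<Sum>x\<in>cube n. \<Sum>S\<in>Pow V. \<bar>restr_fourier f V x S\<bar> powr (2 * (1 + \<epsilon>))) / 2 ^ n"

end

theory Submission
  imports Defs "HOL-Analysis.Convex"
begin


lemma lim0_aux:
  assumes "(e::real) > 0"
  shows "((\<lambda>y::real. y * (y^2) powr e) \<longlongrightarrow> 0) (at 0)"
proof -
  have "((\<lambda>y::real. y * (y^2) powr e) \<longlongrightarrow> 0 * (0^2) powr e) (at 0)"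
    using assms by (intro tendsto_intros) auto
  then show ?thesis by simp
qed

lemma lim0_aux2:
  assumes "(e::real) > 0"
  shows "((\<lambda>y::real. (y^2) powr e) \<longlongrightarrow> 0) (at 0)"
proof -
  have "((\<lambda>y::real. (y^2) powr e) \<longlongrightarrow> (0^2) powr e) (at 0)"
    using assms by (intro tendsto_intros) auto
  then show ?thesis by simp
qed

lemma deriv_h:
  assumes "(e::real) > 0"
  shows "((\<lambda>t. t^2 * (t^2) powr e) has_real_derivative 2*(1+e)* (t * (t^2) powr e)) (at t)"
proof (cases "t = 0")
  case True
  have "((\<lambda>y. (y^2 * (y^2) powr e - 0) / y) \<longlongrightarrow> 0) (at 0)"
  proof (rule Lim_transform_eventually[OF lim0_aux[OF assms]])
    show "\<forall>\<^sub>F y in at 0. y * (y^2) powr e = (y^2 * (y^2) powr e - 0) / y"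
      by (auto simp: eventually_at_filter power2_eq_square)
  qed
  then show ?thesis using True by (simp add: DERIV_def)
next
  case False
  then have pos: "t^2 > 0" by simp
  have "((\<lambda>t. t^2 * (t^2) powr e) has_real_derivative (2*t) * (t^2) powr e + t^2 * (e * (t^2) powr (e - 1) * (2*t))) (at t)"
    by (intro derivative_eq_intros DERIV_fun_powr[where r=e] pos) auto
  moreover have "(2*t) * (t^2) powr e + t^2 * (e * (t^2) powr (e - 1) * (2*t)) = 2*(1+e)* (t * (t^2) powr e)"
  proof -
    have "t^2 * (t^2) powr (e - 1) = (t^2) powr e"
      using pos by (simp add: powr_diff)
    then show ?thesis by (simp add: algebra_simps)
  qed
  ultimately show ?thesis by simp
qed

lemma deriv_h1:
  assumes "(e::real) > 0"
  shows "((\<lambda>t. t * (t^2) powr e) has_real_derivative (1+2*e) * (t^2) powr e) (at t)"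
proof (cases "t = 0")
  case True
  have "((\<lambda>y. (y * (y^2) powr e - 0) / y) \<longlongrightarrow> 0) (at 0)"
  proof (rule Lim_transform_eventually[OF lim0_aux2[OF assms]])
    show "\<forall>\<^sub>F y in at 0. (y^2) powr e = (y * (y^2) powr e - 0) / y"
      by (auto simp: eventually_at_filter)
  qed
  then show ?thesis using True assms by (simp add: DERIV_def)
next
  case False
  then have pos: "t^2 > 0" by simp
  have "((\<lambda>t. t * (t^2) powr e) has_real_derivative 1 * (t^2) powr e + t * (e * (t^2) powr (e - 1) * (2*t))) (at t)"
    by (intro derivative_eq_intros DERIV_fun_powr[where r=e] pos) auto
  moreover have "1 * (t^2) powr e + t * (e * (t^2) powr (e - 1) * (2*t)) = (1+2*e) * (t^2) powr e"
  proof -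
    have "t^2 * (t^2) powr (e - 1) = (t^2) powr e"
      using pos by (simp add: powr_diff)
    then have "t * (e * (t^2) powr (e - 1) * (2*t)) = 2*e*(t^2) powr e"
      by (simp add: power2_eq_square algebra_simps)
    then show ?thesis by (simp add: algebra_simps)
  qed
  ultimately show ?thesis by simp
qed

lemma bern_powr:
  assumes "(x::real) \<ge> 0" "0 < e" "e < 1"
  shows "x powr e \<le> e * x + (1 - e)"
proof (cases "x = 0")
  case True then show ?thesis using assms by simp
next
  case False
  then show ?thesis using Youngs_inequality_0[of e "1-e" x 1] assms by simp
qed

lemma concave_powr2:
  assumes "(A::real) \<ge> 0" "B \<ge> 0" "0 < e" "e < 1"
  shows "A powr e + B powr e \<le> 2 * ((A + B)/2) powr e"
proof (cases "A + B = 0")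
  case True
  then have "A = 0" "B = 0" using assms by auto
  then show ?thesis by simp
next
  case False
  define M where "M = (A+B)/2"
  have M: "M > 0" using False assms unfolding M_def by auto
  have "(A/M) powr e \<le> e * (A/M) + (1 - e)" using bern_powr[of "A/M" e] assms M by simp
  moreover have "(B/M) powr e \<le> e * (B/M) + (1 - e)" using bern_powr[of "B/M" e] assms M by simp
  ultimately have "(A/M) powr e + (B/M) powr e \<le> e*((A+B)/M) + 2*(1-e)"
    by (simp add: add_divide_distrib algebra_simps)
  also have "(A+B)/M = 2" using M unfolding M_def by (simp add: field_simps)
  then have "e*((A+B)/M) + 2*(1-e) = 2" by simp
  finally have "(A powr e + B powr e) / M powr e \<le> 2"
    using assms M by (simp add: powr_divide add_divide_distrib)
  then show ?thesis using M unfolding M_def[symmetric]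
    by (simp add: divide_le_eq)
qed

lemma abs_powr_eq:
  "\<bar>t::real\<bar> powr (2*(1+e)) = t^2 * (t^2) powr e"
proof (cases "t = 0")
  case True then show ?thesis by simp
next
  case False
  have "\<bar>t\<bar> powr (2*(1+e)) = \<bar>t\<bar> powr (2 + 2*e)" by (simp add: algebra_simps)
  also have "\<dots> = \<bar>t\<bar> powr 2 * \<bar>t\<bar> powr (2*e)"
    by (rule powr_add)
  also have "\<bar>t\<bar> powr (2*e) = (\<bar>t\<bar> powr 2) powr e" by (metis powr_powr)
  also have "\<bar>t\<bar> powr 2 = t^2" by simp
  finally show ?thesis by (simp only:)
qed

lemma key_ineq:
  fixes u v e :: real
  assumes e: "0 < e" "e < 1"
  defines "H \<equiv> \<lambda>t::real. t^2 * (t^2) powr e"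
  shows "(H (u+v) + H (u-v))/2 - H u \<le> (1+e)*(1+2*e) * v^2 * (u^2+v^2) powr e"
proof -
  define Y where "Y = (u^2+v^2) powr e"
  define P where "P = (1+e)*(1+2*e)"
  define H1 where "H1 = (\<lambda>t::real. t * (t^2) powr e)"
  define E where "E = (\<lambda>t::real. (t^2) powr e)"
  define G1 where "G1 = (\<lambda>s. (1+e)*v*(H1 (u+s*v) - H1 (u-s*v)) - 2*P*Y*v^2*s)"
  define g where "g = (\<lambda>s. (H (u+s*v) + H (u-s*v))/2 - H u - P*Y*v^2*s^2)"
  have dH: "\<And>t. (H has_real_derivative 2*(1+e)*H1 t) (at t)"
    unfolding H_def H1_def using deriv_h[OF e(1)] by simp
  have dH1: "\<And>t. (H1 has_real_derivative (1+2*e)*E t) (at t)"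
    unfolding H1_def E_def using deriv_h1[OF e(1)] by simp
  have dG1: "(G1 has_real_derivative P*v^2*(E (u+s*v) + E (u-s*v)) - 2*P*Y*v^2) (at s)" for s
  proof -
    have c1: "((\<lambda>z. H1 (u + z*v)) has_real_derivative (1+2*e)*E (u+s*v) * v) (at s)"
      by (rule DERIV_chain2[OF dH1]) (auto intro!: derivative_eq_intros)
    have c2: "((\<lambda>z. H1 (u - z*v)) has_real_derivative (1+2*e)*E (u-s*v) * (-v)) (at s)"
      by (rule DERIV_chain2[OF dH1]) (auto intro!: derivative_eq_intros)
    have c3: "((\<lambda>z. (1+e)*v*(H1 (u + z*v) - H1 (u - z*v))) has_real_derivative (1+e)*v*((1+2*e)*E (u+s*v) * v - (1+2*e)*E (u-s*v) * (-v))) (at s)"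
      by (rule DERIV_cmult[OF DERIV_diff[OF c1 c2]])
    have c4: "((\<lambda>z. 2*P*Y*v^2*z) has_real_derivative 2*P*Y*v^2) (at s)"
      using DERIV_cmult[OF DERIV_ident, of "2*P*Y*v^2" s] by simp
    have "(G1 has_real_derivative (1+e)*v*((1+2*e)*E (u+s*v) * v - (1+2*e)*E (u-s*v) * (-v)) - 2*P*Y*v^2) (at s)"
      unfolding G1_def by (rule DERIV_diff[OF c3 c4])
    then show ?thesis by (simp add: P_def power2_eq_square algebra_simps)
  qed
  have dg: "(g has_real_derivative G1 s) (at s)" for s
  proof -
    have c1: "((\<lambda>z. H (u + z*v)) has_real_derivative 2*(1+e)*H1 (u+s*v) * v) (at s)"
      by (rule DERIV_chain2[OF dH]) (auto intro!: derivative_eq_intros)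
    have c2: "((\<lambda>z. H (u - z*v)) has_real_derivative 2*(1+e)*H1 (u-s*v) * (-v)) (at s)"
      by (rule DERIV_chain2[OF dH]) (auto intro!: derivative_eq_intros)
    have c3: "((\<lambda>z. (H (u + z*v) + H (u - z*v))/2 - H u) has_real_derivative (2*(1+e)*H1 (u+s*v) * v + 2*(1+e)*H1 (u-s*v) * (-v))/2 - 0) (at s)"
      by (rule DERIV_diff[OF DERIV_cdivide[OF DERIV_add[OF c1 c2]] DERIV_const])
    have c4: "((\<lambda>z. P*Y*v^2*z^2) has_real_derivative P*Y*v^2*(2*s)) (at s)"
      by (auto intro!: derivative_eq_intros)
    have D: "(g has_real_derivative (2*(1+e)*H1 (u+s*v) * v + 2*(1+e)*H1 (u-s*v) * (-v))/2 - 0 - P*Y*v^2*(2*s)) (at s)"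
      unfolding g_def by (rule DERIV_diff[OF c3 c4])
    have eq: "(2*(1+e)*H1 (u+s*v) * v + 2*(1+e)*H1 (u-s*v) * (-v))/2 - 0 - P*Y*v^2*(2*s) = G1 s"
      by (simp add: G1_def field_simps)
    show ?thesis using D unfolding eq .
  qed
  have G1le: "G1 s \<le> 0" if s: "0 \<le> s" "s \<le> 1" for s
  proof -
    have "G1 s \<le> G1 0"
    proof (rule DERIV_nonpos_imp_nonincreasing[OF s(1)])
      fix x assume x: "0 \<le> x" "x \<le> s"
      have "E (u+x*v) + E (u-x*v) \<le> 2 * (((u+x*v)^2 + (u-x*v)^2)/2) powr e"
        unfolding E_def using concave_powr2 e by simp
      also have "((u+x*v)^2 + (u-x*v)^2)/2 = u^2 + x^2*v^2" by (simp add: power2_eq_square algebra_simps)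
      also have "(u^2 + x^2*v^2) powr e \<le> Y"
      proof -
        have "x^2 \<le> 1" using x s by (simp add: power_le_one)
        then have "x^2*v^2 \<le> v^2" by (simp add: mult_left_le_one_le)
        then show ?thesis unfolding Y_def using e by (intro powr_mono2) auto
      qed
      finally have "E (u+x*v) + E (u-x*v) \<le> 2*Y" by simp
      moreover have "P \<ge> 0" using e by (simp add: P_def)
      ultimately have "P*v^2*(E (u+x*v) + E (u-x*v)) \<le> P*v^2*(2*Y)"
        by (intro mult_left_mono) auto
      then show "\<exists>y. (G1 has_real_derivative y) (at x) \<and> y \<le> 0"
        using dG1[of x] by (intro exI[of _ "P*v^2*(E (u+x*v) + E (u-x*v)) - 2*P*Y*v^2"]) (simp add: algebra_simps)
    qed
    also have "G1 0 = 0" by (simp add: G1_def)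
    finally show ?thesis .
  qed
  have "g 1 \<le> g 0"
    by (rule DERIV_nonpos_imp_nonincreasing) (use dg G1le in auto)
  then show ?thesis by (simp add: g_def Y_def P_def mult_ac)
qed

definition Dq :: "real \<Rightarrow> real \<Rightarrow> real \<Rightarrow> real" where
  "Dq e u v = (\<bar>u+v\<bar> powr (2*(1+e)) + \<bar>u-v\<bar> powr (2*(1+e)))/2
      - \<bar>u\<bar> powr (2*(1+e)) - \<bar>v\<bar> powr (2*(1+e))"

lemma young_c:
  fixes a b c e :: real
  assumes "a \<ge> 0" "b > 0" "c > 0" "0 < e" "e < 1"
  shows "a powr (1-e) * b powr e \<le> (1-e) * c powr (-e) * a + e * c powr (1-e) * b"
proof (cases "a = 0")
  case True then show ?thesis using assms by simp
next
  case False
  have Y: "(a/c) powr (1-e) * b powr e \<le> (1-e)*(a/c) + e*b"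
    using Youngs_inequality_0[of "1-e" e "a/c" b] assms False by simp
  have e2: "c powr (1-e) * (a/c) powr (1-e) = a powr (1-e)"
    using assms False by (simp add: powr_divide)
  have e3: "c powr (1-e) * (a/c) = c powr (-e) * a"
  proof -
    have "c powr (1-e) = c * c powr (-e)" using powr_add[of c 1 "-e"] assms by simp
    then show ?thesis using assms by simp
  qed
  have "a powr (1-e) * b powr e = c powr (1-e) * ((a/c) powr (1-e) * b powr e)"
    using e2 by (simp add: mult.assoc[symmetric])
  also have "\<dots> \<le> c powr (1-e) * ((1-e)*(a/c) + e*b)"
    using Y by (intro mult_left_mono) auto
  also have "\<dots> = (1-e)*(c powr (1-e)*(a/c)) + e*c powr (1-e)*b" by (simp add: algebra_simps)
  also have "\<dots> = (1-e) * c powr (-e) * a + e * c powr (1-e) * b" using e3 by simp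
  finally show ?thesis .
qed

lemma pointwise:
  fixes u v c e :: real
  assumes e: "0 < e" "e < 1" and c: "c > 0" and uv: "u^2 + v^2 \<le> 1"
  shows "Dq e u v \<le> ((1+e)*(1+2*e) - 2) * v^2 + (1-e) * c powr (-e) * v^2
            + e * c powr (1-e) * (u^2+v^2)"
proof (cases "v = 0")
  case True
  then show ?thesis using e c by (simp add: Dq_def)
next
  case False
  define P where "P = (1+e)*(1+2*e)"
  define Y where "Y = (u^2+v^2) powr e"
  define Z where "Z = (v^2) powr e"
  have v2: "v^2 > 0" using False by simp
  have Zpos: "Z > 0" using v2 by (simp add: Z_def)
  have ZY: "Z \<le> Y" unfolding Z_def Y_def using e by (intro powr_mono2) auto
  have Y1: "Y \<le> 1" unfolding Y_def using powr_mono2[of e "u^2+v^2" 1] uv e by simp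
  have P1: "P \<ge> 1" unfolding P_def using e mult_pos_pos[of e e] by (simp add: algebra_simps)
  have "Dq e u v \<le> P * v^2 * Y - v^2 * Z"
    using key_ineq[OF e, of u v] unfolding Dq_def abs_powr_eq P_def Y_def Z_def by simp
  also have "\<dots> \<le> (P - 2) * v^2 + v^2 * Y / Z"
  proof -
    have "P*Y - Z \<le> P - 2 + Y/Z"
    proof -
      have "(P-1)*(1-Y) \<ge> 0" using P1 Y1 by simp
      moreover have "(Y-Z)*(1-Z)/Z \<ge> 0" using ZY Zpos Y1 by simp
      moreover have "P - 2 + Y/Z - (P*Y - Z) = (P-1)*(1-Y) + (Y-Z)*(1-Z)/Z"
        using Zpos by (simp add: field_simps)
      ultimately show ?thesis by linarith
    qed
    then have "v^2 * (P*Y - Z) \<le> v^2 * (P - 2 + Y/Z)" using v2 by (intro mult_left_mono) auto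
    then show ?thesis by (simp add: algebra_simps)
  qed
  also have "v^2 * Y / Z = (v^2) powr (1-e) * (u^2+v^2) powr e"
    using v2 by (simp add: Z_def Y_def powr_diff)
  also have "\<dots> \<le> (1-e) * c powr (-e) * v^2 + e * c powr (1-e) * (u^2+v^2)"
  proof -
    have "u^2+v^2 > 0" using v2 by (simp add: add_nonneg_pos)
    then show ?thesis using young_c[of "v^2" "u^2+v^2" c e] v2 c e by simp
  qed
  finally show ?thesis by (simp add: P_def)
qed



definition mixv :: "nat set \<Rightarrow> (nat \<Rightarrow> real) \<Rightarrow> (nat \<Rightarrow> real) \<Rightarrow> (nat \<Rightarrow> real)" where
  "mixv J x y = (\<lambda>i. if i \<in> J then y i else x i)"

definition coef :: "nat set \<Rightarrow> ((nat \<Rightarrow> real) \<Rightarrow> real) \<Rightarrow> nat set \<Rightarrow> real" where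
  "coef J g S = (\<Sum>y\<in>cube_on J. g y * (\<Prod>i\<in>S. y i))"

lemma cube_on_empty: "cube_on {} = {\<lambda>_. 1}"
  by (auto simp: cube_on_def)

lemma cube_insert:
  assumes "j \<notin> J"
  shows "cube_on (insert j J) = (\<lambda>y. y(j:=1)) ` cube_on J \<union> (\<lambda>y. y(j:=-1)) ` cube_on J"
proof
  show "cube_on (insert j J) \<subseteq> (\<lambda>y. y(j:=1)) ` cube_on J \<union> (\<lambda>y. y(j:=-1)) ` cube_on J"
  proof
    fix z assume z: "z \<in> cube_on (insert j J)"
    then have zj: "z j = -1 \<or> z j = 1" by (auto simp: cube_on_def)
    have y: "z(j:=1) \<in> cube_on J" using z assms by (auto simp: cube_on_def)
    show "z \<in> (\<lambda>y. y(j:=1)) ` cube_on J \<union> (\<lambda>y. y(j:=-1)) ` cube_on J"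
    proof (cases "z j = 1")
      case True
      then have "z = (z(j:=1))(j:=1)" by auto
      then show ?thesis using y by blast
    next
      case False
      then have "z = (z(j:=1))(j:=-1)" using zj by auto
      then show ?thesis using y by blast
    qed
  qed
next
  show "(\<lambda>y. y(j:=1)) ` cube_on J \<union> (\<lambda>y. y(j:=-1)) ` cube_on J \<subseteq> cube_on (insert j J)"
  proof
    fix z assume "z \<in> (\<lambda>y. y(j:=1)) ` cube_on J \<union> (\<lambda>y. y(j:=-1)) ` cube_on J"
    then obtain y t where y: "y \<in> cube_on J" "t = 1 \<or> t = -1" and z: "z = y(j:=t)" by blast
    show "z \<in> cube_on (insert j J)"
      unfolding cube_on_def
    proof (intro CollectI conjI allI ballI impI)
      fix i assume "i \<in> insert j J"
      then show "z i = -1 \<or> z i = 1"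
        using y unfolding z cube_on_def by (cases "i = j") auto
    next
      fix i assume "i \<notin> insert j J"
      then show "z i = 1" using y unfolding z cube_on_def by auto
    qed
  qed
qed

lemma finite_cube: "finite J \<Longrightarrow> finite (cube_on J)"
proof (induction J rule: finite_induct)
  case empty then show ?case by (simp add: cube_on_empty)
next
  case (insert j J) then show ?case by (simp add: cube_insert)
qed

lemma cube_upd_inj:
  assumes "j \<notin> J"
  shows "inj_on (\<lambda>y. y(j:=t)) (cube_on J)"
proof (rule inj_onI)
  fix y y' assume y: "y \<in> cube_on J" "y' \<in> cube_on J" and eq: "y(j:=t) = y'(j:=t)"
  have "y j = 1" "y' j = 1" using y assms by (auto simp: cube_on_def)
  then show "y = y'" using eq by (metis fun_upd_triv fun_upd_upd)
qed

lemma sum_cube_insert: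
  assumes "finite J" "j \<notin> J"
  shows "(\<Sum>y\<in>cube_on (insert j J). G y) = (\<Sum>y\<in>cube_on J. G (y(j:=1)) + G (y(j:=-1)))"
proof -
  have fin: "finite (cube_on J)" using assms finite_cube by blast
  have disj: "(\<lambda>y. y(j:=1)) ` cube_on J \<inter> (\<lambda>y. y(j:=-1)) ` cube_on J = {}"
  proof -
    { fix y y' :: "nat \<Rightarrow> real" assume "y(j:=1) = y'(j:=-1)"
      then have "(y(j:=1)) j = (y'(j:=-1)) j" by simp
      then have False by simp }
    then show ?thesis by blast
  qed
  have "(\<Sum>y\<in>cube_on (insert j J). G y) = (\<Sum>y\<in>(\<lambda>y. y(j:=1)) ` cube_on J. G y) + (\<Sum>y\<in>(\<lambda>y. y(j:=-1)) ` cube_on J. G y)"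
    unfolding cube_insert[OF assms(2)] by (rule sum.union_disjoint) (use fin disj in auto)
  also have "\<dots> = (\<Sum>y\<in>cube_on J. G (y(j:=1))) + (\<Sum>y\<in>cube_on J. G (y(j:=-1)))"
    using cube_upd_inj[OF assms(2)] by (simp add: sum.reindex)
  finally show ?thesis by (simp add: sum.distrib)
qed

lemma card_cube: "finite J \<Longrightarrow> card (cube_on J) = 2 ^ card J"
proof (induction J rule: finite_induct)
  case empty then show ?case by (simp add: cube_on_empty)
next
  case (insert j J)
  have "real (card (cube_on (insert j J))) = (\<Sum>y\<in>cube_on (insert j J). 1)" by simp
  also have "\<dots> = (\<Sum>y\<in>cube_on J. 1 + 1)" using sum_cube_insert[OF insert(1,2), of "\<lambda>_. 1::real"] by simp
  also have "\<dots> = 2 * real (card (cube_on J))" by simp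
  also have "\<dots> = real (2 * card (cube_on J))" by simp
  finally have "card (cube_on (insert j J)) = 2 * card (cube_on J)" by (simp only: of_nat_eq_iff)
  then show ?case using insert by simp
qed

lemma cube_n_insert: "j < n \<Longrightarrow> cube n = cube_on (insert j ({0..<n} - {j}))"
  by (simp add: insert_absorb)

lemma pairing:
  assumes "j < n"
  shows "(\<Sum>x\<in>cube n. K (x(j:=1)) + K (x(j:=-1))) = 2 * (\<Sum>x\<in>cube n. (K x :: real))"
proof -
  have f: "finite ({0..<n} - {j})" "j \<notin> {0..<n} - {j}" by auto
  define J0 where "J0 = {0..<n} - {j}"
  have eq: "cube n = cube_on (insert j J0)" unfolding J0_def using assms by (rule cube_n_insert)
  have fJ: "finite J0" "j \<notin> J0" using f unfolding J0_def by auto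
  have 1: "(\<Sum>x\<in>cube n. K x) = (\<Sum>y\<in>cube_on J0. K (y(j:=1)) + K (y(j:=-1)))"
    unfolding eq by (rule sum_cube_insert[OF fJ])
  have "(\<Sum>x\<in>cube n. K (x(j:=1)) + K (x(j:=-1)))
      = (\<Sum>y\<in>cube_on J0. (K ((y(j:=1))(j:=1)) + K ((y(j:=1))(j:=-1))) + (K ((y(j:=-1))(j:=1)) + K ((y(j:=-1))(j:=-1))))"
    unfolding eq by (rule sum_cube_insert[OF fJ])
  also have "\<dots> = (\<Sum>y\<in>cube_on J0. 2 * (K (y(j:=1)) + K (y(j:=-1))))"
    by (simp only: fun_upd_upd mult_2)
  also have "\<dots> = 2 * (\<Sum>x\<in>cube n. K x)"
    unfolding 1 by (simp only: sum_distrib_left)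
  finally show ?thesis .
qed

lemma prod_upd_notin:
  assumes "j \<notin> S"
  shows "(\<Prod>i\<in>S. (y(j:=t)) i) = (\<Prod>i\<in>S. y i)"
  using assms by (intro prod.cong) auto

lemma prod_if_notin:
  assumes "j \<notin> S"
  shows "(\<Prod>i\<in>S. if i = j then t else y i) = prod y S"
  using assms by (intro prod.cong) auto

lemma coef_insert1:
  assumes "finite J" "j \<notin> J" "S \<subseteq> J"
  shows "coef (insert j J) g S = coef J (\<lambda>y. g (y(j:=1)) + g (y(j:=-1))) S"
proof -
  have "j \<notin> S" using assms by auto
  then show ?thesis
    unfolding coef_def sum_cube_insert[OF assms(1,2)]
    by (simp add: prod_if_notin algebra_simps)
qed

lemma coef_insert2:
  assumes "finite J" "j \<notin> J" "S \<subseteq> J"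
  shows "coef (insert j J) g (insert j S) = coef J (\<lambda>y. g (y(j:=1)) - g (y(j:=-1))) S"
proof -
  have jS: "j \<notin> S" and fS: "finite S" using assms finite_subset by auto
  have pt: "\<And>(y::nat\<Rightarrow>real) t. (\<Prod>i\<in>insert j S. (y(j:=t)) i) = t * (\<Prod>i\<in>S. y i)"
  proof -
    fix y :: "nat \<Rightarrow> real" and t :: real
    have "(\<Prod>i\<in>insert j S. (y(j:=t)) i) = (y(j:=t)) j * (\<Prod>i\<in>S. (y(j:=t)) i)"
      by (rule prod.insert[OF fS jS])
    also have "(\<Prod>i\<in>S. (y(j:=t)) i) = (\<Prod>i\<in>S. y i)"
      using jS by (rule prod_upd_notin)
    finally show "(\<Prod>i\<in>insert j S. (y(j:=t)) i) = t * (\<Prod>i\<in>S. y i)" by simp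
  qed
  have "\<And>y. g (y(j:=1)) * (\<Prod>i\<in>insert j S. (y(j:=1)) i) + g (y(j:=-1)) * (\<Prod>i\<in>insert j S. (y(j:=-1)) i)
      = (g (y(j:=1)) - g (y(j:=-1))) * (\<Prod>i\<in>S. y i)"
    unfolding pt by (simp add: algebra_simps)
  then show ?thesis
    unfolding coef_def sum_cube_insert[OF assms(1,2)]
    by (intro sum.cong) auto
qed

lemma parseval:
  assumes "finite J"
  shows "(\<Sum>S\<in>Pow J. (coef J g S)^2) = 2 ^ card J * (\<Sum>y\<in>cube_on J. (g y)^2)"
  using assms
proof (induction J arbitrary: g rule: finite_induct)
  case empty
  then show ?case by (simp add: coef_def cube_on_empty)
next
  case (insert j J)
  define g1 where "g1 = (\<lambda>y. g (y(j:=1)) + g (y(j:=-1)))"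
  define g2 where "g2 = (\<lambda>y. g (y(j:=1)) - g (y(j:=-1)))"
  have inj: "inj_on (insert j) (Pow J)"
    using insert(2) by (intro inj_onI) (metis Pow_iff insert_ident subsetD)
  have disj: "Pow J \<inter> insert j ` Pow J = {}" using insert(2) by auto
  have "(\<Sum>S\<in>Pow (insert j J). (coef (insert j J) g S)^2)
      = (\<Sum>S\<in>Pow J. (coef (insert j J) g S)^2) + (\<Sum>S\<in>insert j ` Pow J. (coef (insert j J) g S)^2)"
    unfolding Pow_insert by (rule sum.union_disjoint) (use insert(1) disj in auto)
  also have "\<dots> = (\<Sum>S\<in>Pow J. (coef J g1 S)^2) + (\<Sum>S\<in>Pow J. (coef J g2 S)^2)"
  proof -
    have 1: "(\<Sum>S\<in>Pow J. (coef (insert j J) g S)^2) = (\<Sum>S\<in>Pow J. (coef J g1 S)^2)"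
      by (rule sum.cong) (auto simp: coef_insert1[OF insert(1,2)] g1_def)
    have "(\<Sum>S\<in>insert j ` Pow J. (coef (insert j J) g S)^2) = (\<Sum>S\<in>Pow J. (coef (insert j J) g (insert j S))^2)"
      by (rule sum.reindex_cong[OF inj refl refl])
    also have "\<dots> = (\<Sum>S\<in>Pow J. (coef J g2 S)^2)"
      by (rule sum.cong) (auto simp: coef_insert2[OF insert(1,2)] g2_def)
    finally show ?thesis using 1 by simp
  qed
  also have "\<dots> = 2 ^ card J * (\<Sum>y\<in>cube_on J. (g1 y)^2 + (g2 y)^2)"
    using insert.IH[of g1] insert.IH[of g2] by (simp only: sum.distrib distrib_left)
  also have "(\<Sum>y\<in>cube_on J. (g1 y)^2 + (g2 y)^2) = (\<Sum>y\<in>cube_on J. 2 * ((g (y(j:=1)))^2 + (g (y(j:=-1)))^2))"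
    by (rule sum.cong) (simp_all add: g1_def g2_def power2_eq_square algebra_simps)
  also have "\<dots> = 2 * (\<Sum>y\<in>cube_on (insert j J). (g y)^2)"
    by (simp only: sum_cube_insert[OF insert(1,2)] sum_distrib_left)
  also have "2 ^ card J * (2 * (\<Sum>y\<in>cube_on (insert j J). (g y)^2)) = 2 ^ card (insert j J) * (\<Sum>y\<in>cube_on (insert j J). (g y)^2)"
    using insert(1,2) by simp
  finally show ?case .
qed

lemma mixv_upd:
  "j \<notin> V \<Longrightarrow> mixv V (x(j:=t)) y = (mixv V x y)(j:=t)"
  by (auto simp: mixv_def)

lemma mixv_insert_upd:
  "j \<notin> V \<Longrightarrow> mixv (insert j V) x (y(j:=t)) = mixv V (x(j:=t)) y"
  by (auto simp: mixv_def)

lemma sum_mixv: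
  assumes "finite V" "V \<subseteq> {0..<n}"
  shows "(\<Sum>x\<in>cube n. \<Sum>y\<in>cube_on V. H (mixv V x y)) = 2 ^ card V * (\<Sum>x\<in>cube n. (H x :: real))"
  using assms
proof (induction V arbitrary: H rule: finite_induct)
  case empty
  have "mixv {} x (\<lambda>_. 1) = x" for x by (simp add: mixv_def)
  then show ?case by (simp add: cube_on_empty)
next
  case (insert j V)
  define K where "K = (\<lambda>x. \<Sum>y\<in>cube_on V. H (mixv V x y))"
  have jn: "j < n" using insert by auto
  have "(\<Sum>x\<in>cube n. \<Sum>y\<in>cube_on (insert j V). H (mixv (insert j V) x y))
     = (\<Sum>x\<in>cube n. K (x(j:=1)) + K (x(j:=-1)))"
    unfolding K_def by (simp only: sum_cube_insert[OF insert(1,2)] mixv_insert_upd[OF insert(2)] sum.distrib)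
  also have "\<dots> = 2 * (\<Sum>x\<in>cube n. K x)" by (rule pairing[OF jn])
  also have "(\<Sum>x\<in>cube n. K x) = 2 ^ card V * (\<Sum>x\<in>cube n. H x)"
    unfolding K_def by (rule insert.IH) (use insert(4) in auto)
  also have "2 * (2 ^ card V * (\<Sum>x\<in>cube n. H x)) = 2 ^ card (insert j V) * (\<Sum>x\<in>cube n. H x)"
    using insert(1,2) by simp
  finally show ?case .
qed

lemma sum_pow_insert:
  assumes "finite J" "j \<notin> J"
  shows "(\<Sum>S\<in>Pow (insert j J). F S) = (\<Sum>S\<in>Pow J. F S + F (insert j S))"
proof -
  have inj: "inj_on (insert j) (Pow J)"
    using assms(2) by (intro inj_onI) (metis Pow_iff insert_ident subsetD)
  have disj: "Pow J \<inter> insert j ` Pow J = {}" using assms(2) by auto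
  have "(\<Sum>S\<in>Pow (insert j J). F S) = (\<Sum>S\<in>Pow J. F S) + (\<Sum>S\<in>insert j ` Pow J. F S)"
    unfolding Pow_insert by (rule sum.union_disjoint) (use assms(1) disj in auto)
  also have "(\<Sum>S\<in>insert j ` Pow J. F S) = (\<Sum>S\<in>Pow J. F (insert j S))"
    by (rule sum.reindex_cong[OF inj refl refl])
  finally show ?thesis by (simp add: sum.distrib)
qed

lemma coef_add: "coef J (\<lambda>y. a y + b y) S = coef J a S + coef J b S"
  unfolding coef_def by (simp add: sum.distrib algebra_simps)

lemma coef_diff: "coef J (\<lambda>y. a y - b y) S = coef J a S - coef J b S"
  unfolding coef_def by (simp add: sum_subtractf algebra_simps)

lemma coef_bound:
  assumes "finite J" "S \<subseteq> J" "\<And>y. y \<in> cube_on J \<Longrightarrow> \<bar>g y\<bar> \<le> 1"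
  shows "\<bar>coef J g S\<bar> \<le> 2 ^ card J"
proof -
  have "\<bar>coef J g S\<bar> \<le> (\<Sum>y\<in>cube_on J. \<bar>g y * (\<Prod>i\<in>S. y i)\<bar>)"
    unfolding coef_def by (rule sum_abs)
  also have "\<dots> \<le> (\<Sum>y\<in>cube_on J. 1)"
  proof (rule sum_mono)
    fix y assume y: "y \<in> cube_on J"
    have "\<bar>\<Prod>i\<in>S. y i\<bar> = (\<Prod>i\<in>S. \<bar>y i\<bar>)" by (simp add: abs_prod)
    also have "\<dots> = 1"
    proof (intro prod.neutral ballI)
      fix i assume "i \<in> S"
      then have "y i = -1 \<or> y i = 1" using y assms(2) unfolding cube_on_def by blast
      then show "\<bar>y i\<bar> = 1" by auto
    qed
    finally show "\<bar>g y * (\<Prod>i\<in>S. y i)\<bar> \<le> 1" using assms(3)[OF y] by (simp add: abs_mult)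
  qed
  also have "\<dots> = 2 ^ card J" using card_cube[OF assms(1)] by simp
  finally show ?thesis .
qed

lemma upd_in_cube:
  assumes "x \<in> cube_on J" "j \<in> J" "t = 1 \<or> t = -1"
  shows "x(j:=t) \<in> cube_on J"
  unfolding cube_on_def
proof (intro CollectI conjI allI ballI impI)
  fix i assume "i \<in> J"
  then show "(x(j:=t)) i = -1 \<or> (x(j:=t)) i = 1"
    using assms unfolding cube_on_def by (cases "i = j") auto
next
  fix i assume "i \<notin> J"
  then show "(x(j:=t)) i = 1" using assms unfolding cube_on_def by auto
qed

lemma mix_in_cube:
  assumes "x \<in> cube_on J" "y \<in> cube_on V" "V \<subseteq> J"
  shows "mixv V x y \<in> cube_on J"
  unfolding cube_on_def
proof (intro CollectI conjI allI ballI impI)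
  fix i assume "i \<in> J"
  then show "mixv V x y i = -1 \<or> mixv V x y i = 1"
    using assms unfolding cube_on_def mixv_def by (cases "i \<in> V") auto
next
  fix i assume "i \<notin> J"
  then show "mixv V x y i = 1" using assms unfolding cube_on_def mixv_def by auto
qed



lemma sum2_cmult: "(\<Sum>x\<in>A. \<Sum>y\<in>B. c * F x y) = c * (\<Sum>x\<in>A. \<Sum>y\<in>B. (F x y :: real))"
  by (simp add: sum_distrib_left)

theorem lemma3p1:
  fixes n :: nat and f :: "(nat \<Rightarrow> real) \<Rightarrow> real"
    and V1 V2 :: "nat set" and k :: nat and \<epsilon> :: real
  assumes "is_boolean_fun n f"
    and "V1 \<subset> {0..<n}"
    and "k \<in> {0..<n} - V1"
    and "V2 = insert k V1"
    and "0 < \<epsilon>" and "\<epsilon> < 1/2"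
  shows "moment n V2 \<epsilon> f - moment n V1 \<epsilon> f \<ge>
    (if influence n f k = 0 then 0
     else - influence n f k *
            (3 * \<epsilon> + 2 * \<epsilon>^2 + (influence n f k / 4) powr (- \<epsilon>) - 1))"
proof -
  note boolf = assms(1)
  have Vsub: "V1 \<subseteq> {0..<n}" using assms(2) by auto
  have fin: "finite V1" using Vsub finite_subset by blast
  have kn: "k < n" and kV: "k \<notin> V1" using assms(3) by auto
  have e: "0 < \<epsilon>" "\<epsilon> < 1" using assms(5,6) by auto
  define m where "m = card V1"
  define q where "q = 2*(1+\<epsilon>)"
  have cardV2: "card (insert k V1) = Suc m" using fin kV by (simp add: m_def)
  have finC: "finite (cube n)" by (simp add: finite_cube)
  have finP: "finite (Pow V1)" using fin by simp
  have upd_in: "x(k:=t) \<in> cube n" if "x \<in> cube n" "t = 1 \<or> t = -1" for x t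
    using upd_in_cube[of x "{0..<n}" k t] that kn by simp
  have mix_in: "mixv V1 x y \<in> cube n" if "x \<in> cube n" "y \<in> cube_on V1" for x y
    using mix_in_cube[OF that Vsub] .
  have fval: "f z = 1 \<or> f z = -1" if "z \<in> cube n" for z
    using boolf that unfolding is_boolean_fun_def by auto
  have rf: "restr_fourier f J x S = coef J (\<lambda>y. f (mixv J x y)) S / 2 ^ card J" for J x S
    unfolding restr_fourier_def restrict_fun_def coef_def mixv_def by simp
  define g1 where "g1 = (\<lambda>x y. f (mixv V1 (x(k:=1)) y))"
  define g2 where "g2 = (\<lambda>x y. f (mixv V1 (x(k:=-1)) y))"
  define U where "U = (\<lambda>x S. coef V1 (\<lambda>y. g1 x y + g2 x y) S / 2^(m+1))"
  define W where "W = (\<lambda>x S. coef V1 (\<lambda>y. g1 x y - g2 x y) S / 2^(m+1))"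
  have E2a: "restr_fourier f V2 x S = U x S" if "S \<subseteq> V1" for x S
    unfolding rf assms(4) cardV2 coef_insert1[OF fin kV that] mixv_insert_upd[OF kV]
    by (simp add: U_def g1_def g2_def)
  have E2b: "restr_fourier f V2 x (insert k S) = W x S" if "S \<subseteq> V1" for x S
    unfolding rf assms(4) cardV2 coef_insert2[OF fin kV that] mixv_insert_upd[OF kV]
    by (simp add: W_def g1_def g2_def)
  have E1a: "restr_fourier f V1 (x(k:=1)) S = U x S + W x S" for x S
  proof -
    have "U x S + W x S = (coef V1 (\<lambda>y. g1 x y + g2 x y) S + coef V1 (\<lambda>y. g1 x y - g2 x y) S) / 2^(m+1)"
      by (simp add: U_def W_def add_divide_distrib)
    also have "\<dots> = 2 * coef V1 (g1 x) S / 2^(m+1)"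
      by (simp add: coef_add coef_diff)
    finally show ?thesis unfolding rf by (simp add: g1_def m_def)
  qed
  have E1b: "restr_fourier f V1 (x(k:=-1)) S = U x S - W x S" for x S
  proof -
    have "U x S - W x S = (coef V1 (\<lambda>y. g1 x y + g2 x y) S - coef V1 (\<lambda>y. g1 x y - g2 x y) S) / 2^(m+1)"
      by (simp add: U_def W_def diff_divide_distrib)
    also have "\<dots> = 2 * coef V1 (g2 x) S / 2^(m+1)"
      by (simp add: coef_add coef_diff)
    finally show ?thesis unfolding rf by (simp add: g2_def m_def)
  qed
  have PowS: "S \<subseteq> V1" if "S \<in> Pow V1" for S using that by auto
  have M2: "moment n V2 \<epsilon> f * 2^n = (\<Sum>x\<in>cube n. \<Sum>S\<in>Pow V1.
      \<bar>U x S\<bar> powr (2*(1+\<epsilon>)) + \<bar>W x S\<bar> powr (2*(1+\<epsilon>)))"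
  proof -
    have "moment n V2 \<epsilon> f * 2^n = (\<Sum>x\<in>cube n. \<Sum>S\<in>Pow (insert k V1). \<bar>restr_fourier f V2 x S\<bar> powr (2*(1+\<epsilon>)))"
      unfolding moment_def assms(4)[symmetric] by simp
    also have "\<dots> = (\<Sum>x\<in>cube n. \<Sum>S\<in>Pow V1. \<bar>restr_fourier f V2 x S\<bar> powr (2*(1+\<epsilon>)) + \<bar>restr_fourier f V2 x (insert k S)\<bar> powr (2*(1+\<epsilon>)))"
      by (simp only: sum_pow_insert[OF fin kV])
    also have "\<dots> = (\<Sum>x\<in>cube n. \<Sum>S\<in>Pow V1. \<bar>U x S\<bar> powr (2*(1+\<epsilon>)) + \<bar>W x S\<bar> powr (2*(1+\<epsilon>)))"
      by (intro sum.cong refl) (simp add: E2a E2b PowS)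
    finally show ?thesis .
  qed
  have M1: "2 * (moment n V1 \<epsilon> f * 2^n) = (\<Sum>x\<in>cube n. \<Sum>S\<in>Pow V1.
      \<bar>U x S + W x S\<bar> powr (2*(1+\<epsilon>)) + \<bar>U x S - W x S\<bar> powr (2*(1+\<epsilon>)))"
  proof -
    define K where "K = (\<lambda>x. \<Sum>S\<in>Pow V1. \<bar>restr_fourier f V1 x S\<bar> powr (2*(1+\<epsilon>)))"
    have "2 * (moment n V1 \<epsilon> f * 2^n) = 2 * (\<Sum>x\<in>cube n. K x)"
      unfolding moment_def K_def by simp
    also have "\<dots> = (\<Sum>x\<in>cube n. K (x(k:=1)) + K (x(k:=-1)))"
      by (rule pairing[OF kn, symmetric])
    also have "\<dots> = (\<Sum>x\<in>cube n. \<Sum>S\<in>Pow V1.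
      \<bar>U x S + W x S\<bar> powr (2*(1+\<epsilon>)) + \<bar>U x S - W x S\<bar> powr (2*(1+\<epsilon>)))"
      unfolding K_def E1a E1b by (simp add: sum.distrib)
    finally show ?thesis .
  qed
  define SD where "SD = (\<Sum>x\<in>cube n. \<Sum>S\<in>Pow V1. Dq \<epsilon> (U x S) (W x S))"
  have diff: "(moment n V2 \<epsilon> f - moment n V1 \<epsilon> f) * 2^n = - SD"
  proof -
    have pt: "Dq \<epsilon> (U x S) (W x S) = (\<bar>U x S + W x S\<bar> powr (2*(1+\<epsilon>)) + \<bar>U x S - W x S\<bar> powr (2*(1+\<epsilon>)))/2
       - (\<bar>U x S\<bar> powr (2*(1+\<epsilon>)) + \<bar>W x S\<bar> powr (2*(1+\<epsilon>)))" for x S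
      by (simp add: Dq_def)
    have "SD = (\<Sum>x\<in>cube n. \<Sum>S\<in>Pow V1. (\<bar>U x S + W x S\<bar> powr (2*(1+\<epsilon>)) + \<bar>U x S - W x S\<bar> powr (2*(1+\<epsilon>)))/2)
       - (\<Sum>x\<in>cube n. \<Sum>S\<in>Pow V1. \<bar>U x S\<bar> powr (2*(1+\<epsilon>)) + \<bar>W x S\<bar> powr (2*(1+\<epsilon>)))"
      unfolding SD_def pt by (simp only: sum_subtractf)
    also have "\<dots> = moment n V1 \<epsilon> f * 2^n - moment n V2 \<epsilon> f * 2^n"
      unfolding M2 using M1 by (simp add: sum_divide_distrib[symmetric])
    finally show ?thesis by (simp add: algebra_simps)
  qed
  have gbound: "\<bar>f (mixv V1 (x(k:=t)) y)\<bar> \<le> 1" and gsq: "(f (mixv V1 (x(k:=t)) y))^2 = 1"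
    if "x \<in> cube n" "t = 1 \<or> t = -1" "y \<in> cube_on V1" for x t y
  proof -
    have "f (mixv V1 (x(k:=t)) y) = 1 \<or> f (mixv V1 (x(k:=t)) y) = -1"
      using fval[OF mix_in[OF upd_in[OF that(1,2)] that(3)]] .
    then show "\<bar>f (mixv V1 (x(k:=t)) y)\<bar> \<le> 1" "(f (mixv V1 (x(k:=t)) y))^2 = 1" by auto
  qed
  have rfb: "\<bar>restr_fourier f V1 (x(k:=t)) S\<bar> \<le> 1" if "x \<in> cube n" "t = 1 \<or> t = -1" "S \<subseteq> V1" for x t S
  proof -
    have "\<bar>coef V1 (\<lambda>y. f (mixv V1 (x(k:=t)) y)) S\<bar> \<le> 2 ^ card V1"
      by (rule coef_bound[OF fin that(3)]) (rule gbound[OF that(1,2)])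
    then show ?thesis unfolding rf by (simp add: divide_le_eq)
  qed
  have B1: "(U x S)^2 + (W x S)^2 \<le> 1" if "x \<in> cube n" "S \<in> Pow V1" for x S
  proof -
    have a: "\<bar>U x S + W x S\<bar> \<le> 1" using rfb[OF that(1) _ PowS[OF that(2)], of 1] E1a by simp
    have b: "\<bar>U x S - W x S\<bar> \<le> 1" using rfb[OF that(1) _ PowS[OF that(2)], of "-1"] E1b by simp
    have "(U x S + W x S)^2 \<le> 1" using a by (simp add: abs_square_le_1)
    moreover have "(U x S - W x S)^2 \<le> 1" using b by (simp add: abs_square_le_1)
    moreover have "(U x S)^2 + (W x S)^2 = ((U x S + W x S)^2 + (U x S - W x S)^2)/2"
      by (simp add: power2_eq_square algebra_simps)
    ultimately show ?thesis by simp
  qed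
  have B2: "(\<Sum>S\<in>Pow V1. (U x S)^2 + (W x S)^2) = 1" if x: "x \<in> cube n" for x
  proof -
    define h1 where "h1 = (\<lambda>y. g1 x y + g2 x y)"
    define h2 where "h2 = (\<lambda>y. g1 x y - g2 x y)"
    define D :: real where "D = (2^(m+1))^2"
    have "(\<Sum>S\<in>Pow V1. (U x S)^2 + (W x S)^2) = (\<Sum>S\<in>Pow V1. ((coef V1 h1 S)^2 + (coef V1 h2 S)^2) / D)"
      by (intro sum.cong refl) (simp add: U_def W_def h1_def h2_def D_def power_divide add_divide_distrib)
    also have "\<dots> = ((\<Sum>S\<in>Pow V1. (coef V1 h1 S)^2) + (\<Sum>S\<in>Pow V1. (coef V1 h2 S)^2)) / D"
      by (simp only: sum_divide_distrib[symmetric] sum.distrib)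
    also have "\<dots> = (2^m * (\<Sum>y\<in>cube_on V1. (h1 y)^2) + 2^m * (\<Sum>y\<in>cube_on V1. (h2 y)^2)) / D"
      by (simp only: parseval[OF fin] m_def)
    also have "\<dots> = 2^m * (\<Sum>y\<in>cube_on V1. (h1 y)^2 + (h2 y)^2) / D"
      by (simp only: sum.distrib distrib_left)
    also have "(\<Sum>y\<in>cube_on V1. (h1 y)^2 + (h2 y)^2) = (\<Sum>y\<in>cube_on V1. 4)"
    proof (rule sum.cong[OF refl])
      fix y assume y: "y \<in> cube_on V1"
      have "(h1 y)^2 + (h2 y)^2 = 2 * (g1 x y)^2 + 2 * (g2 x y)^2"
        by (simp add: h1_def h2_def power2_eq_square algebra_simps)
      also have "\<dots> = 4" using gsq[OF x _ y, of 1] gsq[OF x _ y, of "-1"] by (simp add: g1_def g2_def)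
      finally show "(h1 y)^2 + (h2 y)^2 = 4" .
    qed
    also have "(\<Sum>y\<in>cube_on V1. (4::real)) = 4 * 2^m" using card_cube[OF fin] by (simp add: m_def)
    also have "2^m * (4 * 2^m) / D = 1" by (simp add: D_def power_add power_mult_distrib power2_eq_square)
    finally show ?thesis .
  qed
  define Hd where "Hd = (\<lambda>z. ((f (z(k:=1)) - f (z(k:=-1)))/2)^2)"
  define Ind where "Ind = (\<lambda>x. if f x \<noteq> f (flip k x) then 1 else (0::real))"
  have W2: "(\<Sum>S\<in>Pow V1. (W x S)^2) = (\<Sum>y\<in>cube_on V1. Hd (mixv V1 x y)) / 2^m" for x
  proof -
    define h2 where "h2 = (\<lambda>y. g1 x y - g2 x y)"
    have "(\<Sum>S\<in>Pow V1. (W x S)^2) = (\<Sum>S\<in>Pow V1. (coef V1 h2 S)^2) / (2^(m+1))^2"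
      unfolding W_def h2_def by (simp only: power_divide sum_divide_distrib)
    also have "\<dots> = 2^m * (\<Sum>y\<in>cube_on V1. (h2 y)^2) / (2^(m+1))^2"
      by (simp only: parseval[OF fin] m_def)
    also have "(\<Sum>y\<in>cube_on V1. (h2 y)^2) = 4 * (\<Sum>y\<in>cube_on V1. Hd (mixv V1 x y))"
      unfolding sum_distrib_left
    proof (rule sum.cong[OF refl])
      fix y
      have "h2 y = f ((mixv V1 x y)(k:=1)) - f ((mixv V1 x y)(k:=-1))"
        unfolding h2_def g1_def g2_def mixv_upd[OF kV] ..
      then show "(h2 y)^2 = 4 * Hd (mixv V1 x y)"
        by (simp add: Hd_def power_divide)
    qed
    also have "2^m * (4 * (\<Sum>y\<in>cube_on V1. Hd (mixv V1 x y))) / (2^(m+1))^2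
        = (\<Sum>y\<in>cube_on V1. Hd (mixv V1 x y)) / 2^m"
      by (simp add: power_add power_mult_distrib power2_eq_square)
    finally show ?thesis .
  qed
  have IndHd: "Ind (x(k:=1)) + Ind (x(k:=-1)) = 2 * Hd x" if x: "x \<in> cube n" for x
  proof -
    have fl1: "flip k (x(k:=1)) = x(k:=-1)" by (simp add: flip_def)
    have fl2: "flip k (x(k:=-1)) = x(k:=1)" by (simp add: flip_def)
    have a: "f (x(k:=1)) = 1 \<or> f (x(k:=1)) = -1" using fval[OF upd_in[OF x]] by simp
    have b: "f (x(k:=-1)) = 1 \<or> f (x(k:=-1)) = -1" using fval[OF upd_in[OF x]] by simp
    show ?thesis using a b unfolding Ind_def Hd_def fl1 fl2 by auto
  qed
  have B3: "(\<Sum>x\<in>cube n. \<Sum>S\<in>Pow V1. (W x S)^2) = 2^n * influence n f k"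
  proof -
    have "(\<Sum>x\<in>cube n. \<Sum>S\<in>Pow V1. (W x S)^2) = (\<Sum>x\<in>cube n. \<Sum>y\<in>cube_on V1. Hd (mixv V1 x y)) / 2^m"
      unfolding W2 by (simp only: sum_divide_distrib)
    also have "\<dots> = (\<Sum>x\<in>cube n. Hd x)"
      unfolding sum_mixv[OF fin Vsub] by (simp add: m_def)
    also have "\<dots> = (\<Sum>x\<in>cube n. Ind x)"
    proof -
      have "2 * (\<Sum>x\<in>cube n. Hd x) = (\<Sum>x\<in>cube n. Ind (x(k:=1)) + Ind (x(k:=-1)))"
        by (simp add: IndHd sum_distrib_left)
      also have "\<dots> = 2 * (\<Sum>x\<in>cube n. Ind x)" by (rule pairing[OF kn])
      finally show ?thesis by simp
    qed
    also have "\<dots> = real (card {x\<in>cube n. f x \<noteq> f (flip k x)})"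
      unfolding Ind_def using sum.inter_filter[OF finC, of "\<lambda>_. 1::real" "\<lambda>x. f x \<noteq> f (flip k x)"]
      by simp
    also have "\<dots> = 2^n * influence n f k" by (simp add: influence_def)
    finally show ?thesis .
  qed
  define I where "I = influence n f k"
  have I0: "I \<ge> 0" unfolding I_def influence_def by simp
  have cardC: "card (cube n) = 2^n" using card_cube[of "{0..<n}"] by simp
  have SUW: "(\<Sum>x\<in>cube n. \<Sum>S\<in>Pow V1. (U x S)^2 + (W x S)^2) = 2^n"
  proof -
    have "(\<Sum>x\<in>cube n. \<Sum>S\<in>Pow V1. (U x S)^2 + (W x S)^2) = (\<Sum>x\<in>cube n. 1)"
      by (rule sum.cong[OF refl]) (rule B2)
    then show ?thesis using cardC by simp
  qed
  have nz: "0 < (2::real)^n" by simp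
  show ?thesis
  proof (cases "I = 0")
    case True
    have "(\<Sum>x\<in>cube n. \<Sum>S\<in>Pow V1. (W x S)^2) = 0" using B3 True I_def by simp
    then have "\<forall>x\<in>cube n. (\<Sum>S\<in>Pow V1. (W x S)^2) = 0"
      using finC by (subst (asm) sum_nonneg_eq_0_iff) (auto intro: sum_nonneg)
    then have Wz: "\<forall>x\<in>cube n. \<forall>S\<in>Pow V1. (W x S)^2 = 0"
      using finP by (subst (asm) sum_nonneg_eq_0_iff) auto
    have "SD = 0" unfolding SD_def
      by (intro sum.neutral ballI) (use Wz in \<open>simp add: Dq_def\<close>)
    then have "moment n V2 \<epsilon> f - moment n V1 \<epsilon> f = 0" using diff by simp
    then show ?thesis using True I_def by simp
  next
    case False
    then have Ipos: "I > 0" using I0 by simp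
    define P where "P = (1+\<epsilon>)*(1+2*\<epsilon>)"
    define A where "A = P - 2 + (1-\<epsilon>) * I powr (-\<epsilon>)"
    define B where "B = \<epsilon> * I powr (1-\<epsilon>)"
    have "SD \<le> (\<Sum>x\<in>cube n. \<Sum>S\<in>Pow V1. A * (W x S)^2 + B * ((U x S)^2 + (W x S)^2))"
      unfolding SD_def
    proof (intro sum_mono)
      fix x S assume x: "x \<in> cube n" and S: "S \<in> Pow V1"
      show "Dq \<epsilon> (U x S) (W x S) \<le> A * (W x S)^2 + B * ((U x S)^2 + (W x S)^2)"
        using pointwise[OF e Ipos B1[OF x S]] by (simp add: A_def B_def P_def algebra_simps)
    qed
    also have "\<dots> = A * (\<Sum>x\<in>cube n. \<Sum>S\<in>Pow V1. (W x S)^2) + B * (\<Sum>x\<in>cube n. \<Sum>S\<in>Pow V1. (U x S)^2 + (W x S)^2)"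
    proof -
      have s1: "(\<Sum>x\<in>cube n. \<Sum>S\<in>Pow V1. A * (W x S)^2 + B * ((U x S)^2 + (W x S)^2))
        = (\<Sum>x\<in>cube n. \<Sum>S\<in>Pow V1. A * (W x S)^2) + (\<Sum>x\<in>cube n. \<Sum>S\<in>Pow V1. B * ((U x S)^2 + (W x S)^2))"
        by (simp only: sum.distrib)
      have s2: "(\<Sum>x\<in>cube n. \<Sum>S\<in>Pow V1. A * (W x S)^2) = A * (\<Sum>x\<in>cube n. \<Sum>S\<in>Pow V1. (W x S)^2)"
        by (rule sum2_cmult)
      have s3: "(\<Sum>x\<in>cube n. \<Sum>S\<in>Pow V1. B * ((U x S)^2 + (W x S)^2)) = B * (\<Sum>x\<in>cube n. \<Sum>S\<in>Pow V1. (U x S)^2 + (W x S)^2)"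
        by (rule sum2_cmult)
      show ?thesis unfolding s1 s2 s3 ..
    qed
    also have "\<dots> = 2^n * (A * I + B)" unfolding B3 SUW I_def[symmetric] by (simp add: algebra_simps)
    finally have SDle: "SD \<le> 2^n * (A * I + B)" .
    have "(moment n V2 \<epsilon> f - moment n V1 \<epsilon> f) * 2^n \<ge> - (2^n * (A * I + B))"
      using diff SDle by simp
    moreover have "- (2^n * (A * I + B)) = (- (A * I + B)) * 2^n" by (metis mult.commute mult_minus_left)
    ultimately have "(- (A * I + B)) * 2^n \<le> (moment n V2 \<epsilon> f - moment n V1 \<epsilon> f) * 2^n" by simp
    then have L: "moment n V2 \<epsilon> f - moment n V1 \<epsilon> f \<ge> - (A * I + B)"
      by (simp only: mult_le_cancel_right_pos[OF nz])
    have pe: "I powr (1-\<epsilon>) = I * I powr (-\<epsilon>)"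
      using powr_add[of I 1 "-\<epsilon>"] Ipos by simp
    have mono: "I powr (-\<epsilon>) \<le> (I/4) powr (-\<epsilon>)"
      using Ipos e by (intro powr_mono2') auto
    have "A * I + B = (3*\<epsilon> + 2*\<epsilon>^2 - 1) * I + I * I powr (-\<epsilon>)"
      unfolding A_def B_def P_def pe by (simp add: power2_eq_square algebra_simps)
    also have "\<dots> \<le> (3*\<epsilon> + 2*\<epsilon>^2 - 1) * I + I * (I/4) powr (-\<epsilon>)"
      using mono Ipos by (simp add: mult_left_mono)
    finally have "A * I + B \<le> influence n f k * (3 * \<epsilon> + 2 * \<epsilon>^2 + (influence n f k / 4) powr (- \<epsilon>) - 1)"
      unfolding I_def by (simp add: algebra_simps)
    then show ?thesis using L False I_def by simp
  qed
qed


end
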